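(* For single-item prophet secretary with independent nonnegative values $v_1,\dots,v_n$ of finite expectation satisfying $\sum_{i=1}^n\Pr[v_i>0]\le1$, there exists a fixed-threshold algorithm (with randomized tie-breaking at the threshold) whose expected accepted value is at least $(1-1/e)\sum_{i=1}^n\mathbb{E}[v_i]$.
   Context: Single-item prophet secretary: buyer $i$ has value $v_i$, independent across buyers, and arrives at an independent uniform time $T_i\in[0,1]$. A fixed-threshold algorithm with threshold $\tau$ and tie probability $\theta\in[0,1]$ gives the item to the first arriving buyer whose value exceeds $\tau$, or equals $\tau$ and wins an independent coin of bias $\theta$; its value is that buyer's value ($0$ if none). *)

theory Defs
  imports "HOL-Probability.Probability"
begin

definition arrival_dist :: "real measure" where
  "arrival_dist = uniform_measure lborel {0..1}"

definition ps_space ::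
  "nat \<Rightarrow> (nat \<Rightarrow> real measure) \<Rightarrow> real \<Rightarrow>
     ((nat \<Rightarrow> real) \<times> (nat \<Rightarrow> real) \<times> (nat \<Rightarrow> bool)) measure" where
  "ps_space n D \<theta> =
     (PiM {..<n} D) \<Otimes>\<^sub>M
       ((PiM {..<n} (\<lambda>_. arrival_dist)) \<Otimes>\<^sub>M
        (PiM {..<n} (\<lambda>_. measure_pmf (bernoulli_pmf \<theta>))))"

definition ft_accepting ::
  "nat \<Rightarrow> real \<Rightarrow> (nat \<Rightarrow> real) \<Rightarrow> (nat \<Rightarrow> bool) \<Rightarrow> nat set" where
  "ft_accepting n \<tau> v c = {i\<in>{..<n}. \<tau> < v i \<or> (v i = \<tau> \<and> c i)}"

text \<open>Value obtained by the fixed-threshold algorithm: the value of the first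
  arriving accepting buyer (0 if none; ties in arrival times, a null event, give 0).\<close>
definition ft_value ::
  "nat \<Rightarrow> real \<Rightarrow> (nat \<Rightarrow> real) \<times> (nat \<Rightarrow> real) \<times> (nat \<Rightarrow> bool) \<Rightarrow> real" where
  "ft_value n \<tau> \<omega> =
     (case \<omega> of (v, t, c) \<Rightarrow>
        (\<Sum>i\<in>ft_accepting n \<tau> v c.
           if (\<forall>j\<in>ft_accepting n \<tau> v c. j \<noteq> i \<longrightarrow> t i < t j) then v i else 0))"

end

theory Submission
  imports Defs
begin


lemma sets_arr[measurable_cong, simp]: "sets arrival_dist = sets borel"
  by (simp add: arrival_dist_def)

lemma space_arr[simp]: "space arrival_dist = UNIV"
  by (simp add: arrival_dist_def)

lemma tonelli3:
  assumes sA: "sigma_finite_measure A" and sB: "sigma_finite_measure B" and sC: "sigma_finite_measure C"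
    and F: "(\<lambda>x. F (fst (fst x)) (snd (fst x)) (snd x)) \<in> borel_measurable ((A \<Otimes>\<^sub>M B) \<Otimes>\<^sub>M C)"
  shows "(\<integral>\<^sup>+\<omega>. F (fst \<omega>) (fst (snd \<omega>)) (snd (snd \<omega>)) \<partial>(A \<Otimes>\<^sub>M (B \<Otimes>\<^sub>M C)))
          = (\<integral>\<^sup>+b. \<integral>\<^sup>+a. \<integral>\<^sup>+c. F a b c \<partial>C \<partial>A \<partial>B)"
proof -
  interpret A: sigma_finite_measure A by fact
  interpret B: sigma_finite_measure B by fact
  interpret C: sigma_finite_measure C by fact
  interpret BC: pair_sigma_finite B C by standard
  interpret AB: pair_sigma_finite A B by standard
  have sBC: "sigma_finite_measure (B \<Otimes>\<^sub>M C)" by (rule BC.sigma_finite_measure_axioms)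
  have assoc: "(\<lambda>x. ((fst x, fst (snd x)), snd (snd x))) \<in> (A \<Otimes>\<^sub>M (B \<Otimes>\<^sub>M C)) \<rightarrow>\<^sub>M ((A \<Otimes>\<^sub>M B) \<Otimes>\<^sub>M C)"
    by measurable
  have F2: "(\<lambda>x. F (fst x) (fst (snd x)) (snd (snd x))) \<in> borel_measurable (A \<Otimes>\<^sub>M (B \<Otimes>\<^sub>M C))"
    using measurable_comp[OF assoc F] by (simp add: comp_def)
  have "(\<integral>\<^sup>+\<omega>. F (fst \<omega>) (fst (snd \<omega>)) (snd (snd \<omega>)) \<partial>(A \<Otimes>\<^sub>M (B \<Otimes>\<^sub>M C)))
      = (\<integral>\<^sup>+a. \<integral>\<^sup>+bc. F a (fst bc) (snd bc) \<partial>(B \<Otimes>\<^sub>M C) \<partial>A)"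
    using sigma_finite_measure.nn_integral_fst[OF sBC F2] by simp
  also have "\<dots> = (\<integral>\<^sup>+a. \<integral>\<^sup>+b. \<integral>\<^sup>+c. F a b c \<partial>C \<partial>B \<partial>A)"
  proof (rule nn_integral_cong)
    fix a assume a: "a \<in> space A"
    have m: "(\<lambda>bc. F a (fst bc) (snd bc)) \<in> borel_measurable (B \<Otimes>\<^sub>M C)"
      using measurable_Pair2[OF F2 a] by simp
    show "(\<integral>\<^sup>+bc. F a (fst bc) (snd bc) \<partial>(B \<Otimes>\<^sub>M C)) = (\<integral>\<^sup>+b. \<integral>\<^sup>+c. F a b c \<partial>C \<partial>B)"
      using C.nn_integral_fst[OF m] by simp
  qed
  also have "\<dots> = (\<integral>\<^sup>+b. \<integral>\<^sup>+a. \<integral>\<^sup>+c. F a b c \<partial>C \<partial>A \<partial>B)"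
  proof (rule AB.Fubini'[symmetric])
    show "(\<lambda>(a,b). \<integral>\<^sup>+c. F a b c \<partial>C) \<in> borel_measurable (A \<Otimes>\<^sub>M B)"
      using C.borel_measurable_nn_integral_fst[OF F] by (simp add: case_prod_beta')
  qed
  finally show ?thesis .
qed

lemma prob_arr: "prob_space arrival_dist"
  unfolding arrival_dist_def by (rule prob_space_uniform_measure) auto

lemma AE_arr: "AE y in arrival_dist. 0 \<le> y \<and> y \<le> 1"
  unfolding arrival_dist_def by (rule AE_uniform_measureI) auto

lemma arr_step:
  assumes y: "0 \<le> y" "y \<le> 1" and a: "0 \<le> a"
  shows "(\<integral>\<^sup>+s. (if s \<le> y then ennreal a else 1) \<partial>arrival_dist) = ennreal (a * y + (1 - y))"
proof -
  have "(\<integral>\<^sup>+s. (if s \<le> y then ennreal a else 1) \<partial>arrival_dist)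
      = (\<integral>\<^sup>+s. (if s \<le> y then ennreal a else 1) * indicator {0..1} s \<partial>lborel) / emeasure lborel {0..1::real}"
    unfolding arrival_dist_def by (rule nn_integral_uniform_measure) auto
  also have "emeasure lborel {0..1::real} = 1" by simp
  also have "(\<integral>\<^sup>+s. (if s \<le> y then ennreal a else 1) * indicator {0..1} s \<partial>lborel)
      = (\<integral>\<^sup>+s. ennreal a * indicator {0..y} s + indicator {y<..1} s \<partial>lborel)"
    using y by (intro nn_integral_cong) (auto simp: indicator_def)
  also have "\<dots> = ennreal a * emeasure lborel {0..y} + emeasure lborel {y<..1}"
    by (subst nn_integral_add) (auto simp: nn_integral_cmult_indicator)
  also have "\<dots> = ennreal (a * y + (1 - y))"
    using y a by (simp add: ennreal_mult[symmetric] ennreal_plus[symmetric] del: ennreal_plus)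
  finally show ?thesis by (simp add: divide_ennreal_def)
qed

locale PS =
  fixes n :: nat and D :: "nat \<Rightarrow> real measure" and \<tau> \<theta> :: real
  assumes prob: "\<And>j. prob_space (D j)"
    and sets_D: "\<And>j. sets (D j) = sets borel"
    and int_D: "\<And>j. integrable (D j) (\<lambda>x. x)"
    and tau: "0 \<le> \<tau>" and th0: "0 \<le> \<theta>" and th1: "\<theta> \<le> 1"
begin

definition acc :: "real \<Rightarrow> bool \<Rightarrow> bool" where
  "acc x b \<longleftrightarrow> \<tau> < x \<or> (x = \<tau> \<and> b)"

definition fi :: "nat \<Rightarrow> (nat \<Rightarrow> real) \<times> (nat \<Rightarrow> real) \<times> (nat \<Rightarrow> bool) \<Rightarrow> real" where
  "fi i \<omega> = (case \<omega> of (v, t, c) \<Rightarrow>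
     if acc (v i) (c i) \<and> (\<forall>j\<in>{..<n}. j \<noteq> i \<longrightarrow> acc (v j) (c j) \<longrightarrow> t i < t j) then v i else 0)"

definition g :: "nat \<Rightarrow> nat \<Rightarrow> real \<Rightarrow> (nat \<Rightarrow> real) \<Rightarrow> bool \<Rightarrow> ennreal" where
  "g i j x t b = (if j = i then ennreal (if acc x b then x else 0)
                  else if acc x b \<and> t j \<le> t i then 0 else 1)"

lemma fi_prod:
  assumes "i < n"
  shows "ennreal (fi i (v, t, c)) = (\<Prod>j<n. g i j (v j) t (c j))"
proof -
  have I: "{..<n} = insert i ({..<n} - {i})" using assms by auto
  have "(\<Prod>j<n. g i j (v j) t (c j)) = g i i (v i) t (c i) * (\<Prod>j\<in>{..<n} - {i}. g i j (v j) t (c j))"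
    by (subst I, subst prod.insert) auto
  moreover have "(\<Prod>j\<in>{..<n} - {i}. g i j (v j) t (c j)) =
      (if (\<forall>j\<in>{..<n}. j \<noteq> i \<longrightarrow> acc (v j) (c j) \<longrightarrow> t i < t j) then 1 else 0)"
  proof (cases "\<forall>j\<in>{..<n}. j \<noteq> i \<longrightarrow> acc (v j) (c j) \<longrightarrow> t i < t j")
    case True then show ?thesis by (auto simp: g_def intro!: prod.neutral)
  next
    case False
    then obtain j where "j < n" "j \<noteq> i" "acc (v j) (c j)" "t j \<le> t i" by auto
    then show ?thesis using False by (auto simp: g_def intro!: prod_zero)
  qed
  ultimately show ?thesis by (auto simp: fi_def g_def)
qed

abbreviation "DN \<equiv> PiM {..<n} D"
abbreviation "TN \<equiv> PiM {..<n} (\<lambda>_. arrival_dist)"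
abbreviation "CN \<equiv> PiM {..<n} (\<lambda>_. measure_pmf (bernoulli_pmf \<theta>))"


abbreviation "BN \<equiv> PiM {..<n} (\<lambda>_. borel :: real measure)"

lemma sets_DN: "sets DN = sets BN"
  by (rule sets_PiM_cong) (auto simp: sets_D)

lemma g_meas: assumes "i < n" "j < n" shows "(\<lambda>x. g i j (fst x) (fst (snd x)) (snd (snd x))) \<in> borel_measurable (borel \<Otimes>\<^sub>M (TN \<Otimes>\<^sub>M count_space UNIV))"
proof -
  show ?thesis
  proof (cases "j = i")
    case True
    have 2: "(\<lambda>x. ennreal (if acc (fst x) (snd (snd x)) then fst x else 0)) \<in> borel_measurable (borel \<Otimes>\<^sub>M (TN \<Otimes>\<^sub>M count_space UNIV))"
      unfolding acc_def by measurable
    show ?thesis using True 2 by (simp add: g_def)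
  next
    case False
    have p0: "Measurable.pred (borel \<Otimes>\<^sub>M (TN \<Otimes>\<^sub>M count_space UNIV)) (\<lambda>x. snd (snd x))"
      by (rule measurable_compose[OF measurable_snd measurable_snd])
    have p1: "Measurable.pred (borel \<Otimes>\<^sub>M (TN \<Otimes>\<^sub>M count_space UNIV)) (\<lambda>x. acc (fst x) (snd (snd x)))"
    proof -
      have a: "Measurable.pred (borel \<Otimes>\<^sub>M (TN \<Otimes>\<^sub>M count_space UNIV)) (\<lambda>x. \<tau> < fst x)" by measurable
      have b: "Measurable.pred (borel \<Otimes>\<^sub>M (TN \<Otimes>\<^sub>M count_space UNIV)) (\<lambda>x. fst x = \<tau>)" by measurable
      show ?thesis unfolding acc_def by (intro pred_intros_logic p0 a b)
    qed
    have p2: "Measurable.pred (borel \<Otimes>\<^sub>M (TN \<Otimes>\<^sub>M count_space UNIV)) (\<lambda>x. fst (snd x) j \<le> fst (snd x) i)"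
    proof -
      have c: "(\<lambda>x. fst (snd x) k) \<in> borel_measurable (borel \<Otimes>\<^sub>M (TN \<Otimes>\<^sub>M count_space UNIV))" if "k < n" for k
      proof -
        have "(\<lambda>t. t k) \<in> TN \<rightarrow>\<^sub>M arrival_dist" using that by (intro measurable_component_singleton) auto
        then have "(\<lambda>t. t k) \<in> borel_measurable TN" using measurable_cong_sets[OF refl sets_arr, of TN] by simp
        then show ?thesis by (rule measurable_compose[OF measurable_compose[OF measurable_snd measurable_fst]])
      qed
      show ?thesis using c[OF assms(1)] c[OF assms(2)] by measurable
    qed
    have 2: "(\<lambda>x. if acc (fst x) (snd (snd x)) \<and> fst (snd x) j \<le> fst (snd x) i then 0 else (1::ennreal)) \<in> borel_measurable (borel \<Otimes>\<^sub>M (TN \<Otimes>\<^sub>M count_space UNIV))"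
      using pred_intros_logic(3)[OF p1 p2] by (intro measurable_If measurable_const) (simp_all add: Measurable.pred_def)
    show ?thesis using False 2 by (simp add: g_def)
  qed
qed

lemma meas0: assumes "i < n" shows "(\<lambda>x. \<Prod>j<n. g i j (fst (fst x) j) (snd (fst x)) (snd x j)) \<in> borel_measurable ((BN \<Otimes>\<^sub>M TN) \<Otimes>\<^sub>M CN)"
proof (rule borel_measurable_prod_ennreal)
  fix j assume "j \<in> {..<n}"
  have m: "(\<lambda>x. (fst (fst x) j, snd (fst x), snd x j)) \<in> (BN \<Otimes>\<^sub>M TN) \<Otimes>\<^sub>M CN \<rightarrow>\<^sub>M borel \<Otimes>\<^sub>M (TN \<Otimes>\<^sub>M count_space UNIV)"
  proof -
    have jn: "j < n" using \<open>j \<in> {..<n}\<close> by simp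
    have a: "(\<lambda>v. v j) \<in> BN \<rightarrow>\<^sub>M borel" using jn by (intro measurable_component_singleton) auto
    have b: "(\<lambda>c. c j) \<in> CN \<rightarrow>\<^sub>M measure_pmf (bernoulli_pmf \<theta>)" using jn by (intro measurable_component_singleton) auto
    then have b': "(\<lambda>c. c j) \<in> CN \<rightarrow>\<^sub>M count_space UNIV"
      using measurable_cong_sets[OF refl, of "measure_pmf (bernoulli_pmf \<theta>)" "count_space UNIV" CN] by simp
    show ?thesis
      apply (intro measurable_Pair)
        apply (rule measurable_compose[OF measurable_compose[OF measurable_fst measurable_fst] a])
       apply (rule measurable_compose[OF measurable_fst measurable_snd])
      apply (rule measurable_compose[OF measurable_snd b'])
      done
  qed
  show "(\<lambda>x. g i j (fst (fst x) j) (snd (fst x)) (snd x j)) \<in> borel_measurable ((BN \<Otimes>\<^sub>M TN) \<Otimes>\<^sub>M CN)"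
    using measurable_comp[OF m g_meas[OF assms]] \<open>j \<in> {..<n}\<close> by (simp add: comp_def)
qed

definition \<alpha> :: "real \<Rightarrow> real" where "\<alpha> x = (if \<tau> < x then 1 else if x = \<tau> then \<theta> else 0)"
definition q :: "nat \<Rightarrow> real" where "q j = (\<integral>x. \<alpha> x \<partial>D j)"
definition e :: "nat \<Rightarrow> real" where "e j = (\<integral>x. x * \<alpha> x \<partial>D j)"
definition W :: "nat \<Rightarrow> real" where "W i = (\<integral>y. (\<Prod>j\<in>{..<n}-{i}. 1 - q j * y) \<partial>arrival_dist)"

lemma alpha01: "0 \<le> \<alpha> x" "\<alpha> x \<le> 1"
  using th0 th1 by (auto simp: \<alpha>_def)

lemma g_bern: "(\<integral>\<^sup>+b. g i j x t b \<partial>measure_pmf (bernoulli_pmf \<theta>)) =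
   (if j = i then ennreal (x * \<alpha> x) else if t j \<le> t i then ennreal (1 - \<alpha> x) else 1)"
proof -
  have "(\<integral>\<^sup>+b. g i j x t b \<partial>measure_pmf (bernoulli_pmf \<theta>)) = g i j x t True * \<theta> + g i j x t False * (1 - \<theta>)"
    using th0 th1 by (intro nn_integral_bernoulli_pmf) auto
  also have "\<dots> = (if j = i then ennreal (x * \<alpha> x) else if t j \<le> t i then ennreal (1 - \<alpha> x) else 1)"
  proof -
    consider "\<tau> < x" | "x = \<tau>" | "x < \<tau>" by linarith
    then show ?thesis
    proof cases
      case 1
      then have x0: "x \<ge> 0" using tau by simp
      have le: "\<theta> * x \<le> x" using x0 th0 th1 by (simp add: mult_left_le_one_le)
      have h: "ennreal (\<theta> * x) + ennreal (x - \<theta> * x) = ennreal x"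
        using le x0 th0 by (subst ennreal_plus[symmetric]) auto
      show ?thesis using 1 th0 th1 x0 h
        by (auto simp: g_def acc_def \<alpha>_def ennreal_mult'[symmetric] ennreal_plus[symmetric] algebra_simps
                 simp del: ennreal_plus)
    next
      case 2
      then show ?thesis using tau th0 th1
        by (auto simp: g_def acc_def \<alpha>_def ennreal_mult'[symmetric] ennreal_plus[symmetric] algebra_simps
                 simp del: ennreal_plus)
    next
      case 3
      then show ?thesis using tau th0 th1
        by (auto simp: g_def acc_def \<alpha>_def ennreal_mult'[symmetric] ennreal_plus[symmetric] algebra_simps
                 simp del: ennreal_plus)
    qed
  qed
  finally show ?thesis .
qed

lemma alpha_meas[measurable]: "\<alpha> \<in> borel_measurable borel"
  unfolding \<alpha>_def by measurable

lemma meas_D_eq: "measurable (D j) (borel :: 'b::topological_space measure) = borel_measurable borel"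
  by (rule measurable_cong_sets) (auto simp: sets_D)

lemma alpha_meas_D: "\<alpha> \<in> borel_measurable (D j)"
  unfolding meas_D_eq by (rule alpha_meas)

lemma id_meas_D: "(\<lambda>x. x) \<in> borel_measurable (D j)"
  unfolding meas_D_eq by simp

lemma xalpha_nonneg: "0 \<le> x * \<alpha> x"
  using tau th0 by (auto simp: \<alpha>_def)

lemma integrable_xalpha: "integrable (D j) (\<lambda>x. x * \<alpha> x)"
proof (rule Bochner_Integration.integrable_bound[OF int_D])
  show "(\<lambda>x. x * \<alpha> x) \<in> borel_measurable (D j)"
    using alpha_meas_D id_meas_D by measurable
  show "AE x in D j. norm (x * \<alpha> x) \<le> norm x"
    using alpha01 by (intro AE_I2) (simp add: abs_mult mult_right_le_one_le)
qed

lemma integrable_alpha: "integrable (D j) \<alpha>"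
proof -
  interpret prob_space "D j" by (rule prob)
  show ?thesis
    by (rule integrable_const_bound[where B=1]) (use alpha01 alpha_meas_D in auto)
qed

lemma nn_e: "(\<integral>\<^sup>+x. ennreal (x * \<alpha> x) \<partial>D j) = ennreal (e j)"
  unfolding e_def by (rule nn_integral_eq_integral[OF integrable_xalpha]) (simp add: xalpha_nonneg)

lemma q_bounds: "0 \<le> q j" "q j \<le> 1"
proof -
  interpret prob_space "D j" by (rule prob)
  show "0 \<le> q j" unfolding q_def using alpha01 by (simp add: integral_nonneg)
  have "q j \<le> (\<integral>x. 1 \<partial>D j)" unfolding q_def
    by (rule integral_mono[OF integrable_alpha]) (use alpha01 in auto)
  then show "q j \<le> 1" by (simp add: prob_space)
qed

lemma nn_q: "(\<integral>\<^sup>+x. ennreal (1 - \<alpha> x) \<partial>D j) = ennreal (1 - q j)"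
proof -
  interpret prob_space "D j" by (rule prob)
  have int: "integrable (D j) (\<lambda>x. 1 - \<alpha> x)"
    using integrable_alpha by auto
  have "(\<integral>\<^sup>+x. ennreal (1 - \<alpha> x) \<partial>D j) = ennreal (\<integral>x. 1 - \<alpha> x \<partial>D j)"
    by (rule nn_integral_eq_integral[OF int]) (use alpha01 in auto)
  also have "(\<integral>x. 1 - \<alpha> x \<partial>D j) = 1 - q j"
  proof -
    have "(\<integral>x. 1 - \<alpha> x \<partial>D j) = (\<integral>x. 1 \<partial>D j) - (\<integral>x. \<alpha> x \<partial>D j)"
      by (rule Bochner_Integration.integral_diff) (auto intro: integrable_alpha)
    then show ?thesis by (simp add: q_def prob_space)
  qed
  finally show ?thesis .
qed

lemma inner_vc:
  assumes "i < n"
  shows "(\<integral>\<^sup>+v. \<integral>\<^sup>+c. (\<Prod>j<n. g i j (v j) t (c j)) \<partial>CN \<partial>DN)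
       = ennreal (e i) * (\<Prod>j\<in>{..<n}-{i}. if t j \<le> t i then ennreal (1 - q j) else 1)"
proof -
  interpret C: product_sigma_finite "\<lambda>_. measure_pmf (bernoulli_pmf \<theta>)"
    by (simp add: product_sigma_finite_def prob_space_imp_sigma_finite prob_space_measure_pmf)
  interpret DD: product_sigma_finite D
    by (simp add: product_sigma_finite_def prob_space_imp_sigma_finite prob)
  define h where "h j x = (if j = i then ennreal (x * \<alpha> x) else if t j \<le> t i then ennreal (1 - \<alpha> x) else 1)" for j x
  have "(\<integral>\<^sup>+v. \<integral>\<^sup>+c. (\<Prod>j<n. g i j (v j) t (c j)) \<partial>CN \<partial>DN) = (\<integral>\<^sup>+v. (\<Prod>j<n. h j (v j)) \<partial>DN)"
  proof (rule nn_integral_cong)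
    fix v
    show "(\<integral>\<^sup>+c. (\<Prod>j<n. g i j (v j) t (c j)) \<partial>CN) = (\<Prod>j<n. h j (v j))"
      by (subst C.product_nn_integral_prod) (auto simp: g_bern h_def)
  qed
  also have "\<dots> = (\<Prod>j<n. \<integral>\<^sup>+x. h j x \<partial>D j)"
  proof (rule DD.product_nn_integral_prod)
    fix j
    show "h j \<in> borel_measurable (D j)"
      unfolding h_def using alpha_meas_D[of j] id_meas_D[of j] by measurable
  qed simp
  also have "\<dots> = (\<Prod>j<n. if j = i then ennreal (e i) else if t j \<le> t i then ennreal (1 - q j) else 1)"
    by (intro prod.cong refl) (auto simp: h_def nn_e nn_q prob_space.emeasure_space_1[OF prob])
  also have "\<dots> = ennreal (e i) * (\<Prod>j\<in>{..<n}-{i}. if t j \<le> t i then ennreal (1 - q j) else 1)"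
  proof -
    have I: "{..<n} = insert i ({..<n} - {i})" using assms by auto
    show ?thesis by (subst I, subst prod.insert) (auto intro!: prod.cong)
  qed
  finally show ?thesis .
qed

lemma outer_t:
  assumes i: "i < n"
  shows "(\<integral>\<^sup>+t. (\<Prod>j\<in>{..<n}-{i}. if t j \<le> t i then ennreal (1 - q j) else 1) \<partial>TN) = ennreal (W i)"
proof -
  interpret T: product_sigma_finite "\<lambda>_. arrival_dist"
    by (simp add: product_sigma_finite_def prob_space_imp_sigma_finite prob_arr)
  interpret A: prob_space arrival_dist by (rule prob_arr)
  define R where "R = {..<n} - {i}"
  have I: "{..<n} = insert i R" "finite R" "i \<notin> R" using i by (auto simp: R_def)
  define F where "F t = (\<Prod>j\<in>R. if t j \<le> t i then ennreal (1 - q j) else 1)" for t :: "nat \<Rightarrow> real"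
  have Fm: "F \<in> borel_measurable (PiM (insert i R) (\<lambda>_. arrival_dist))"
    unfolding F_def
  proof (rule borel_measurable_prod_ennreal)
    fix j assume j: "j \<in> R"
    have c: "(\<lambda>t. t k) \<in> borel_measurable (PiM (insert i R) (\<lambda>_. arrival_dist))" if "k \<in> insert i R" for k
    proof -
      have "(\<lambda>t. t k) \<in> PiM (insert i R) (\<lambda>_. arrival_dist) \<rightarrow>\<^sub>M arrival_dist"
        using that by (intro measurable_component_singleton) auto
      then show ?thesis using measurable_cong_sets[OF refl sets_arr, of "PiM (insert i R) (\<lambda>_. arrival_dist)"] by simp
    qed
    show "(\<lambda>t. if t j \<le> t i then ennreal (1 - q j) else 1) \<in> borel_measurable (PiM (insert i R) (\<lambda>_. arrival_dist))"
      by (intro measurable_If measurable_const borel_measurable_le c) (use j in auto)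
  qed
  have "(\<integral>\<^sup>+t. (\<Prod>j\<in>{..<n}-{i}. if t j \<le> t i then ennreal (1 - q j) else 1) \<partial>TN)
      = (\<integral>\<^sup>+t. F t \<partial>PiM (insert i R) (\<lambda>_. arrival_dist))"
    by (simp only: F_def R_def[symmetric] I(1)[symmetric])
  also have "\<dots> = (\<integral>\<^sup>+y. (\<integral>\<^sup>+t. F (t(i := y)) \<partial>PiM R (\<lambda>_. arrival_dist)) \<partial>arrival_dist)"
    by (rule T.product_nn_integral_insert_rev[OF I(2) I(3) Fm])
  also have "\<dots> = (\<integral>\<^sup>+y. ennreal (\<Prod>j\<in>R. 1 - q j * y) \<partial>arrival_dist)"
  proof (rule nn_integral_cong_AE)
    show "AE y in arrival_dist. (\<integral>\<^sup>+t. F (t(i := y)) \<partial>PiM R (\<lambda>_. arrival_dist)) = ennreal (\<Prod>j\<in>R. 1 - q j * y)"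
      using AE_arr
    proof eventually_elim
      case (elim y)
      have "(\<integral>\<^sup>+t. F (t(i := y)) \<partial>PiM R (\<lambda>_. arrival_dist))
          = (\<integral>\<^sup>+t. (\<Prod>j\<in>R. (\<lambda>s. if s \<le> y then ennreal (1 - q j) else 1) (t j)) \<partial>PiM R (\<lambda>_. arrival_dist))"
        using I(3) by (intro nn_integral_cong) (auto simp: F_def intro!: prod.cong)
      also have "\<dots> = (\<Prod>j\<in>R. \<integral>\<^sup>+s. (if s \<le> y then ennreal (1 - q j) else 1) \<partial>arrival_dist)"
        by (rule T.product_nn_integral_prod) (auto simp: I(2))
      also have "\<dots> = (\<Prod>j\<in>R. ennreal (1 - q j * y))"
        using elim q_bounds by (intro prod.cong refl) (subst arr_step, auto simp: algebra_simps)
      also have "\<dots> = ennreal (\<Prod>j\<in>R. 1 - q j * y)"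
      proof (rule prod_ennreal)
        fix j show "0 \<le> 1 - q j * y" using elim q_bounds[of j] by (simp add: mult_le_one)
      qed
      finally show ?case .
    qed
  qed
  also have "\<dots> = ennreal (W i)"
  proof -
    have m: "(\<lambda>y. \<Prod>j\<in>R. 1 - q j * y) \<in> borel_measurable arrival_dist"
      using measurable_cong_sets[OF sets_arr refl, of borel] by simp
    have b: "AE y in arrival_dist. 0 \<le> (\<Prod>j\<in>R. 1 - q j * y) \<and> (\<Prod>j\<in>R. 1 - q j * y) \<le> 1"
      using AE_arr
    proof eventually_elim
      case (elim y)
      have h: "0 \<le> 1 - q j * y \<and> 1 - q j * y \<le> 1" for j using elim q_bounds[of j] by (simp add: mult_le_one)
      show ?case using h by (auto intro: prod_nonneg prod_le_1)
    qed
    have int: "integrable arrival_dist (\<lambda>y. \<Prod>j\<in>R. 1 - q j * y)"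
      by (rule A.integrable_const_bound[where B=1]) (use b m in auto)
    show ?thesis unfolding W_def R_def[symmetric]
      by (rule nn_integral_eq_integral[OF int]) (use b in auto)
  qed
  finally show ?thesis .
qed

lemma meas1:
  assumes "i < n"
  shows "(\<lambda>x. \<Prod>j<n. g i j (fst (fst x) j) (snd (fst x)) (snd x j)) \<in> borel_measurable ((DN \<Otimes>\<^sub>M TN) \<Otimes>\<^sub>M CN)"
proof -
  have "sets ((DN \<Otimes>\<^sub>M TN) \<Otimes>\<^sub>M CN) = sets ((BN \<Otimes>\<^sub>M TN) \<Otimes>\<^sub>M CN)"
    by (intro sets_pair_measure_cong sets_DN refl)
  then show ?thesis using meas0[OF assms]
    using measurable_cong_sets[OF _ refl, of "(DN \<Otimes>\<^sub>M TN) \<Otimes>\<^sub>M CN" "(BN \<Otimes>\<^sub>M TN) \<Otimes>\<^sub>M CN" "borel :: ennreal measure"]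
    by simp
qed

lemma meas2:
  assumes "i < n"
  shows "(\<lambda>x. \<Prod>j<n. g i j (fst x j) (fst (snd x)) (snd (snd x) j)) \<in> borel_measurable (DN \<Otimes>\<^sub>M (TN \<Otimes>\<^sub>M CN))"
proof -
  have assoc: "(\<lambda>x. ((fst x, fst (snd x)), snd (snd x))) \<in> (DN \<Otimes>\<^sub>M (TN \<Otimes>\<^sub>M CN)) \<rightarrow>\<^sub>M ((DN \<Otimes>\<^sub>M TN) \<Otimes>\<^sub>M CN)"
    by measurable
  show ?thesis using measurable_comp[OF assoc meas1[OF assms]] by (simp add: comp_def)
qed

lemma prodT_meas:
  assumes i: "i < n"
  shows "(\<lambda>t. \<Prod>j\<in>{..<n}-{i}. if t j \<le> t i then ennreal (1 - q j) else 1) \<in> borel_measurable TN"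
proof (rule borel_measurable_prod_ennreal)
  fix j assume j: "j \<in> {..<n}-{i}"
  have c: "(\<lambda>t. t k) \<in> borel_measurable TN" if "k < n" for k
  proof -
    have "(\<lambda>t. t k) \<in> TN \<rightarrow>\<^sub>M arrival_dist"
      using that by (intro measurable_component_singleton) auto
    then show ?thesis using measurable_cong_sets[OF refl sets_arr, of TN] by simp
  qed
  show "(\<lambda>t. if t j \<le> t i then ennreal (1 - q j) else 1) \<in> borel_measurable TN"
    by (intro measurable_If measurable_const borel_measurable_le c) (use j i in auto)
qed

lemma e_nonneg: "0 \<le> e j"
  unfolding e_def by (rule Bochner_Integration.integral_nonneg) (simp add: xalpha_nonneg)

lemma nn_fi:
  assumes i: "i < n"
  shows "(\<integral>\<^sup>+\<omega>. ennreal (fi i \<omega>) \<partial>(DN \<Otimes>\<^sub>M (TN \<Otimes>\<^sub>M CN))) = ennreal (e i * W i)"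
proof -
  have sD: "sigma_finite_measure DN"
    by (rule prob_space_imp_sigma_finite, rule prob_space_PiM) (rule prob)
  have sT: "sigma_finite_measure TN"
    by (rule prob_space_imp_sigma_finite, rule prob_space_PiM) (rule prob_arr)
  have sC: "sigma_finite_measure CN"
    by (rule prob_space_imp_sigma_finite, rule prob_space_PiM) (rule prob_space_measure_pmf)
  have "(\<integral>\<^sup>+\<omega>. ennreal (fi i \<omega>) \<partial>(DN \<Otimes>\<^sub>M (TN \<Otimes>\<^sub>M CN)))
     = (\<integral>\<^sup>+\<omega>. (\<lambda>v t c. \<Prod>j<n. g i j (v j) t (c j)) (fst \<omega>) (fst (snd \<omega>)) (snd (snd \<omega>)) \<partial>(DN \<Otimes>\<^sub>M (TN \<Otimes>\<^sub>M CN)))"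
    by (intro nn_integral_cong) (metis fi_prod[OF i] prod.collapse)
  also have "\<dots> = (\<integral>\<^sup>+t. \<integral>\<^sup>+v. \<integral>\<^sup>+c. (\<Prod>j<n. g i j (v j) t (c j)) \<partial>CN \<partial>DN \<partial>TN)"
    by (rule tonelli3[OF sD sT sC]) (use meas1[OF i] in simp)
  also have "\<dots> = (\<integral>\<^sup>+t. ennreal (e i) * (\<Prod>j\<in>{..<n}-{i}. if t j \<le> t i then ennreal (1 - q j) else 1) \<partial>TN)"
    by (intro nn_integral_cong inner_vc[OF i])
  also have "\<dots> = ennreal (e i) * ennreal (W i)"
    by (subst nn_integral_cmult[OF prodT_meas[OF i]]) (simp add: outer_t[OF i])
  also have "\<dots> = ennreal (e i * W i)"
    using e_nonneg[of i] by (simp add: ennreal_mult')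
  finally show ?thesis .
qed

lemma fi_nonneg: "0 \<le> fi i \<omega>"
  using tau by (auto simp: fi_def acc_def split: prod.splits)

lemma W_nonneg: "0 \<le> W i"
  unfolding W_def
proof (rule integral_nonneg_AE)
  show "AE y in arrival_dist. 0 \<le> (\<Prod>j\<in>{..<n} - {i}. 1 - q j * y)"
    using AE_arr
  proof eventually_elim
    case (elim y)
    have h: "0 \<le> 1 - q j * y" for j using elim q_bounds[of j] by (simp add: mult_le_one)
    show ?case using h by (auto intro: prod_nonneg)
  qed
qed

lemma fi_meas:
  assumes i: "i < n"
  shows "fi i \<in> borel_measurable (DN \<Otimes>\<^sub>M (TN \<Otimes>\<^sub>M CN))"
proof -
  have "fi i = (\<lambda>x. enn2real (\<Prod>j<n. g i j (fst x j) (fst (snd x)) (snd (snd x) j)))"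
  proof
    fix x :: "(nat \<Rightarrow> real) \<times> (nat \<Rightarrow> real) \<times> (nat \<Rightarrow> bool)"
    obtain v t c where x: "x = (v, t, c)" by (metis prod.collapse)
    show "fi i x = enn2real (\<Prod>j<n. g i j (fst x j) (fst (snd x)) (snd (snd x) j))"
      using fi_prod[OF i, of v t c, symmetric] fi_nonneg[of i x] by (simp add: x)
  qed
  then show ?thesis using meas2[OF i] by simp
qed

lemma hbi_fi:
  assumes i: "i < n"
  shows "has_bochner_integral (DN \<Otimes>\<^sub>M (TN \<Otimes>\<^sub>M CN)) (fi i) (e i * W i)"
  by (rule has_bochner_integral_nn_integral[OF fi_meas[OF i]])
     (use fi_nonneg e_nonneg W_nonneg nn_fi[OF i] in auto)

lemma ft_sum: "ft_value n \<tau> \<omega> = (\<Sum>i<n. fi i \<omega>)"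
proof -
  obtain v t c where x: "\<omega> = (v, t, c)" by (metis prod.collapse)
  have A: "ft_accepting n \<tau> v c = {i\<in>{..<n}. acc (v i) (c i)}"
    by (auto simp: ft_accepting_def acc_def)
  have "(\<Sum>i<n. fi i \<omega>) = (\<Sum>i\<in>{i\<in>{..<n}. acc (v i) (c i)}. fi i \<omega>)"
    by (rule sum.mono_neutral_right) (auto simp: fi_def x)
  also have "\<dots> = ft_value n \<tau> \<omega>"
    unfolding ft_value_def x prod.case A by (intro sum.cong refl) (auto simp: fi_def)
  finally show ?thesis by simp
qed

lemma int_ft: "(\<integral>\<omega>. ft_value n \<tau> \<omega> \<partial>ps_space n D \<theta>) = (\<Sum>i<n. e i * W i)"
proof -
  have "has_bochner_integral (ps_space n D \<theta>) (\<lambda>\<omega>. \<Sum>i<n. fi i \<omega>) (\<Sum>i<n. e i * W i)"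
    unfolding ps_space_def by (rule has_bochner_integral_sum) (use hbi_fi in auto)
  then show ?thesis by (simp add: ft_sum has_bochner_integral_integral_eq)
qed

end

lemma arr_density: "arrival_dist = density lborel (\<lambda>x. ennreal (indicator {0..1::real} x))"
  unfolding arrival_dist_def uniform_measure_def
  by (simp add: divide_ennreal_def ennreal_indicator)

lemma arr_int:
  fixes f :: "real \<Rightarrow> real"
  assumes f: "f \<in> borel_measurable borel"
  shows "(\<integral>y. f y \<partial>arrival_dist) = (\<integral>x. indicator {0..1} x *\<^sub>R f x \<partial>lborel)"
  unfolding arr_density
  by (rule integral_density) (use f in auto)

lemma arr_FTC:
  fixes f F :: "real \<Rightarrow> real"
  assumes F: "\<And>x. 0 \<le> x \<Longrightarrow> x \<le> 1 \<Longrightarrow> (F has_field_derivative f x) (at x)"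
    and f: "continuous_on UNIV f"
  shows "(\<integral>y. f y \<partial>arrival_dist) = F 1 - F 0"
proof -
  have fm: "f \<in> borel_measurable borel" using f by (rule borel_measurable_continuous_onI)
  have "(\<integral>y. f y \<partial>arrival_dist) = (\<integral>x. indicator {0..1} x *\<^sub>R f x \<partial>lborel)"
    by (rule arr_int[OF fm])
  also have "\<dots> = F 1 - F 0"
  proof (rule integral_FTC_atLeastAtMost)
    fix x :: real assume "0 \<le> x" "x \<le> 1"
    then show "(F has_vector_derivative f x) (at x within {0..1})"
      using F by (simp add: has_real_derivative_iff_has_vector_derivative[symmetric] has_field_derivative_at_within)
  next
    show "continuous_on {0..1} f" using f by (rule continuous_on_subset) auto
  qed simp
  finally show ?thesis .
qed

lemma int_exp_arr: "(\<integral>y. exp (- y) \<partial>arrival_dist) = 1 - exp (-1)"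
proof -
  have "(\<integral>y. exp (- y) \<partial>arrival_dist) = (\<lambda>y. - exp (- y)) 1 - (\<lambda>y. - exp (- y)) 0"
    by (rule arr_FTC) (auto intro!: derivative_eq_intros continuous_intros)
  then show ?thesis by simp
qed

lemma exp_le_lin:
  fixes q y :: real
  assumes q: "0 \<le> q" "q < 1" and y: "0 \<le> y" "y \<le> 1"
  shows "exp (y * ln (1 - q)) \<le> 1 - q * y"
proof -
  have "exp ((1 - y) *\<^sub>R 0 + y *\<^sub>R ln (1 - q)) \<le> (1 - y) * exp 0 + y * exp (ln (1 - q))"
    by (rule convex_onD[OF exp_convex]) (use y in auto)
  then show ?thesis using q by (simp add: algebra_simps)
qed

lemma arr_integrable:
  fixes f :: "real \<Rightarrow> real"
  assumes f: "continuous_on UNIV f"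
  shows "integrable arrival_dist f"
proof -
  interpret A: prob_space arrival_dist by (rule prob_arr)
  have "bounded (f ` {0..1})"
    by (rule compact_imp_bounded, rule compact_continuous_image) (use f continuous_on_subset in auto)
  then obtain B where B0: "\<forall>x\<in>f ` {0..1}. norm x \<le> B"
    unfolding bounded_iff by blast
  have B: "\<And>y. y \<in> {0..1} \<Longrightarrow> norm (f y) \<le> B" using B0 by blast
  have fm: "f \<in> borel_measurable arrival_dist"
    using borel_measurable_continuous_onI[OF f] measurable_cong_sets[OF sets_arr refl, of borel] by simp
  show ?thesis
    by (rule A.integrable_const_bound[where B=B]) (use AE_arr B fm in auto)
qed

context PS
begin

lemma W_cont: "continuous_on UNIV (\<lambda>y. \<Prod>j\<in>{..<n}-{i}. 1 - q j * y)"
  by (intro continuous_intros)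

lemma W_lb:
  assumes i: "i < n" and P: "exp (-1) \<le> (\<Prod>j<n. 1 - q j)"
  shows "1 - exp (-1) \<le> W i"
proof -
  have qlt: "q j < 1" if "j < n" for j
  proof (rule ccontr)
    assume "\<not> q j < 1"
    then have "q j = 1" using q_bounds[of j] by simp
    then have z: "(\<Prod>j<n. 1 - q j) = 0" using that by (intro prod_zero) auto
    show False using P unfolding z by simp
  qed
  have pos: "0 < 1 - q j" if "j < n" for j using qlt[OF that] by simp
  have lnP: "ln (\<Prod>j<n. 1 - q j) = (\<Sum>j<n. ln (1 - q j))"
    by (rule ln_prod) (use pos in force)+
  have lnP1: "-1 \<le> ln (\<Prod>j<n. 1 - q j)"
  proof -
    have "ln (exp (-1)) \<le> ln (\<Prod>j<n. 1 - q j)"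
      using P by (subst ln_le_cancel_iff) (auto intro: less_le_trans[OF exp_gt_zero])
    then show ?thesis by simp
  qed
  have pt: "exp (- y) \<le> (\<Prod>j\<in>{..<n}-{i}. 1 - q j * y)" if y: "0 \<le> y" "y \<le> 1" for y
  proof -
    have "exp (- y) \<le> exp (y * ln (\<Prod>j<n. 1 - q j))"
    proof -
      have "y * (-1) \<le> y * ln (\<Prod>j<n. 1 - q j)" by (rule mult_left_mono[OF lnP1 y(1)])
      then show ?thesis by simp
    qed
    also have "\<dots> = (\<Prod>j<n. exp (y * ln (1 - q j)))"
      by (simp add: lnP sum_distrib_left exp_sum)
    also have "\<dots> \<le> (\<Prod>j<n. 1 - q j * y)"
      by (rule prod_mono) (use exp_le_lin q_bounds qlt y in auto)
    also have "\<dots> = (1 - q i * y) * (\<Prod>j\<in>{..<n}-{i}. 1 - q j * y)"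
    proof -
      have I: "{..<n} = insert i ({..<n} - {i})" using i by auto
      show ?thesis by (subst I, subst prod.insert) auto
    qed
    also have "\<dots> \<le> (\<Prod>j\<in>{..<n}-{i}. 1 - q j * y)"
    proof -
      have h: "0 \<le> 1 - q j * y" for j using y q_bounds[of j] by (simp add: mult_le_one)
      have "0 \<le> (\<Prod>j\<in>{..<n}-{i}. 1 - q j * y)" using h by (auto intro: prod_nonneg)
      moreover have "1 - q i * y \<le> 1" using y q_bounds[of i] by simp
      moreover have "0 \<le> q i * y" using y q_bounds[of i] by simp
      ultimately have "0 \<le> (q i * y) * (\<Prod>j\<in>{..<n}-{i}. 1 - q j * y)" by simp
      then show ?thesis by (simp add: algebra_simps)
    qed
    finally show ?thesis .
  qed
  have "(\<integral>y. exp (- y) \<partial>arrival_dist) \<le> W i"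
    unfolding W_def
  proof (rule integral_mono_AE)
    show "integrable arrival_dist (\<lambda>y. exp (- y))" by (rule arr_integrable) (intro continuous_intros)
    show "integrable arrival_dist (\<lambda>y. \<Prod>j\<in>{..<n}-{i}. 1 - q j * y)" by (rule arr_integrable[OF W_cont])
    show "AE y in arrival_dist. exp (- y) \<le> (\<Prod>j\<in>{..<n}-{i}. 1 - q j * y)"
      using AE_arr by eventually_elim (use pt in auto)
  qed
  then show ?thesis by (simp add: int_exp_arr)
qed

lemma sumqW: "(\<Sum>i<n. q i * W i) = 1 - (\<Prod>j<n. 1 - q j)"
proof -
  have "(\<Sum>i<n. q i * W i) = (\<Sum>i<n. \<integral>y. q i * (\<Prod>j\<in>{..<n}-{i}. 1 - q j * y) \<partial>arrival_dist)"
    unfolding W_def by simp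
  also have "\<dots> = (\<integral>y. (\<Sum>i<n. q i * (\<Prod>j\<in>{..<n}-{i}. 1 - q j * y)) \<partial>arrival_dist)"
    by (rule Bochner_Integration.integral_sum[symmetric]) (auto intro!: arr_integrable continuous_intros)
  also have "\<dots> = (\<lambda>y. - (\<Prod>j<n. 1 - q j * y)) 1 - (\<lambda>y. - (\<Prod>j<n. 1 - q j * y)) 0"
  proof (rule arr_FTC)
    fix x :: real
    have "((\<lambda>y. \<Prod>j<n. 1 - q j * y) has_field_derivative (\<Sum>j<n. (- q j) * (\<Prod>k\<in>{..<n}-{j}. 1 - q k * x))) (at x)"
      by (rule has_field_derivative_prod) (auto intro!: derivative_eq_intros)
    then have "((\<lambda>y. - (\<Prod>j<n. 1 - q j * y)) has_field_derivative - (\<Sum>j<n. (- q j) * (\<Prod>k\<in>{..<n}-{j}. 1 - q k * x))) (at x)"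
      by (rule DERIV_minus)
    then show "((\<lambda>y. - (\<Prod>j<n. 1 - q j * y)) has_field_derivative (\<Sum>i<n. q i * (\<Prod>j\<in>{..<n}-{i}. 1 - q j * x))) (at x)"
      by (simp add: sum_negf[symmetric])
  next
    show "continuous_on UNIV (\<lambda>y. \<Sum>i<n. q i * (\<Prod>j\<in>{..<n}-{i}. 1 - q j * y))"
      by (intro continuous_intros)
  qed
  also have "\<dots> = 1 - (\<Prod>j<n. 1 - q j)" by simp
  finally show ?thesis .
qed

definition sp :: "nat \<Rightarrow> real" where "sp j = (\<integral>x. max 0 (x - \<tau>) \<partial>D j)"

lemma integrable_sp: "integrable (D j) (\<lambda>x. max 0 (x - \<tau>))"
proof -
  interpret prob_space "D j" by (rule prob)
  show ?thesis using int_D[of j] by (intro integrable_max) auto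
qed

lemma sp_nonneg: "0 \<le> sp j"
  unfolding sp_def by (rule Bochner_Integration.integral_nonneg) simp

lemma e_decomp: "e j = \<tau> * q j + sp j"
proof -
  have "e j = (\<integral>x. \<tau> * \<alpha> x + max 0 (x - \<tau>) \<partial>D j)"
    unfolding e_def by (intro Bochner_Integration.integral_cong refl) (auto simp: \<alpha>_def)
  also have "\<dots> = \<tau> * q j + sp j"
    unfolding q_def sp_def using integrable_alpha integrable_sp by simp
  finally show ?thesis .
qed

lemma mean_bound:
  assumes nn: "AE x in D j. 0 \<le> x"
  shows "(\<integral>x. x \<partial>D j) \<le> \<tau> * measure (D j) {0<..} + sp j"
proof -
  interpret prob_space "D j" by (rule prob)
  have S: "{0<..} \<in> sets (D j)" by (simp add: sets_D)
  have "(\<integral>x. x \<partial>D j) \<le> (\<integral>x. \<tau> * indicator {0<..} x + max 0 (x - \<tau>) \<partial>D j)"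
  proof (rule integral_mono_AE)
    show "integrable (D j) (\<lambda>x. x)" by (rule int_D)
    show "integrable (D j) (\<lambda>x. \<tau> * indicator {0<..} x + max 0 (x - \<tau>))"
      using integrable_sp S by (intro Bochner_Integration.integrable_add integrable_mult_right integrable_real_indicator) (auto simp: emeasure_finite less_top[symmetric])
    show "AE x in D j. x \<le> \<tau> * indicator {0<..} x + max 0 (x - \<tau>)"
      using nn by eventually_elim (auto simp: indicator_def)
  qed
  also have "\<dots> = \<tau> * measure (D j) {0<..} + sp j"
    unfolding sp_def using integrable_sp S by (simp add: integrable_real_indicator emeasure_finite less_top[symmetric])
  finally show ?thesis .
qed

lemma final:
  assumes P1: "exp (-1) \<le> (\<Prod>j<n. 1 - q j)"
    and P2: "\<tau> = 0 \<or> (\<Prod>j<n. 1 - q j) \<le> exp (-1)"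
    and nn: "\<And>i. i < n \<Longrightarrow> AE x in D i. 0 \<le> x"
    and small: "(\<Sum>i<n. measure (D i) {0<..}) \<le> 1"
  shows "(1 - 1 / exp 1) * (\<Sum>i<n. \<integral>x. x \<partial>D i) \<le> (\<integral>\<omega>. ft_value n \<tau> \<omega> \<partial>ps_space n D \<theta>)"
proof -
  let ?c = "1 - exp (-1) :: real"
  have c0: "0 \<le> ?c" by simp
  have "(\<integral>\<omega>. ft_value n \<tau> \<omega> \<partial>ps_space n D \<theta>) = (\<Sum>i<n. (\<tau> * q i + sp i) * W i)"
    by (simp add: int_ft e_decomp)
  also have "\<dots> = \<tau> * (\<Sum>i<n. q i * W i) + (\<Sum>i<n. sp i * W i)"
    by (simp add: algebra_simps sum.distrib sum_distrib_left)
  also have "\<dots> = \<tau> * (1 - (\<Prod>j<n. 1 - q j)) + (\<Sum>i<n. sp i * W i)"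
    by (simp add: sumqW)
  finally have eq: "(\<integral>\<omega>. ft_value n \<tau> \<omega> \<partial>ps_space n D \<theta>) = \<tau> * (1 - (\<Prod>j<n. 1 - q j)) + (\<Sum>i<n. sp i * W i)" .
  have t1: "\<tau> * ?c \<le> \<tau> * (1 - (\<Prod>j<n. 1 - q j))"
    using P2 tau by (auto intro: mult_left_mono)
  have t2: "(\<Sum>i<n. sp i * ?c) \<le> (\<Sum>i<n. sp i * W i)"
    by (intro sum_mono mult_left_mono W_lb P1 sp_nonneg) auto
  have m: "(\<Sum>i<n. \<integral>x. x \<partial>D i) \<le> \<tau> * (\<Sum>i<n. measure (D i) {0<..}) + (\<Sum>i<n. sp i)"
    by (simp add: sum_distrib_left sum.distrib[symmetric]) (intro sum_mono mean_bound nn, simp)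
  also have "\<dots> \<le> \<tau> + (\<Sum>i<n. sp i)"
    using small tau by (simp add: mult_left_le)
  finally have m2: "(\<Sum>i<n. \<integral>x. x \<partial>D i) \<le> \<tau> + (\<Sum>i<n. sp i)" .
  have "(1 - 1 / exp 1) * (\<Sum>i<n. \<integral>x. x \<partial>D i) = ?c * (\<Sum>i<n. \<integral>x. x \<partial>D i)"
    by (simp add: exp_minus inverse_eq_divide)
  also have "\<dots> \<le> ?c * (\<tau> + (\<Sum>i<n. sp i))"
    by (rule mult_left_mono[OF m2 c0])
  also have "\<dots> = \<tau> * ?c + (\<Sum>i<n. sp i * ?c)"
    by (simp add: algebra_simps sum_distrib_left)
  also have "\<dots> \<le> \<tau> * (1 - (\<Prod>j<n. 1 - q j)) + (\<Sum>i<n. sp i * W i)"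
    using t1 t2 by linarith
  finally show ?thesis using eq by simp
qed


lemma q_eq: "q j = measure (D j) {\<tau><..} + \<theta> * measure (D j) {\<tau>}"
proof -
  interpret prob_space "D j" by (rule prob)
  have "q j = (\<integral>x. indicator {\<tau><..} x + \<theta> * indicator {\<tau>} x \<partial>D j)"
    unfolding q_def by (intro Bochner_Integration.integral_cong refl) (auto simp: \<alpha>_def indicator_def)
  also have "\<dots> = measure (D j) {\<tau><..} + \<theta> * measure (D j) {\<tau>}"
    by (subst Bochner_Integration.integral_add) (auto simp: sets_D emeasure_finite less_top[symmetric])
  finally show ?thesis .
qed

end




lemma exists_tau:
  fixes D :: "nat \<Rightarrow> real measure"
  assumes prob: "\<And>j. prob_space (D j)" and sets: "\<And>j. sets (D j) = sets borel"
    and G0: "(\<Prod>j<n. 1 - measure (D j) {0<..}) < exp (-1)"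
  shows "\<exists>\<tau> \<theta>. 0 \<le> \<tau> \<and> 0 \<le> \<theta> \<and> \<theta> \<le> 1 \<and>
           (\<Prod>j<n. 1 - (measure (D j) {\<tau><..} + \<theta> * measure (D j) {\<tau>})) = exp (-1)"
proof -
  define G where "G \<tau> = (\<Prod>j<n. 1 - measure (D j) {\<tau><..})" for \<tau> :: real
  define H where "H \<tau> = (\<Prod>j<n. 1 - measure (D j) {\<tau>..})" for \<tau> :: real
  have le1: "measure (D j) A \<le> 1" for j A using prob_space.prob_le_1[OF prob] by blast
  have Gmono: "G a \<le> G b" if "a \<le> b" for a b
    unfolding G_def
  proof (rule prod_mono)
    fix j assume "j \<in> {..<n}"
    interpret prob_space "D j" by (rule prob)
    have "measure (D j) {b<..} \<le> measure (D j) {a<..}"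
      using that by (intro finite_measure_mono) (auto simp: sets)
    then show "0 \<le> 1 - measure (D j) {a<..} \<and> 1 - measure (D j) {a<..} \<le> 1 - measure (D j) {b<..}"
      using le1[of j "{a<..}"] by simp
  qed
  have Ginf: "(\<lambda>k. G (real k)) \<longlonglongrightarrow> 1"
  proof -
    have "(\<lambda>k. \<Prod>j<n. 1 - measure (D j) {real k<..}) \<longlonglongrightarrow> (\<Prod>j<n. 1 - 0)"
    proof (intro tendsto_prod tendsto_diff tendsto_const)
      fix j
      interpret prob_space "D j" by (rule prob)
      have "(\<lambda>k. measure (D j) {real k<..}) \<longlonglongrightarrow> measure (D j) (\<Inter>k. {real k<..})"
        by (rule finite_Lim_measure_decseq) (auto simp: sets decseq_def)
      moreover have "(\<Inter>k. {real k<..}) = {}"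
      proof -
        have "x \<notin> (\<Inter>k. {real k<..})" for x
        proof -
          obtain k where "x \<le> real k" using real_arch_simple by blast
          then show ?thesis by (auto simp: not_less)
        qed
        then show ?thesis by blast
      qed
      ultimately show "(\<lambda>k. measure (D j) {real k<..}) \<longlonglongrightarrow> 0" by simp
    qed
    then show ?thesis by (simp add: G_def)
  qed
  have "\<forall>\<^sub>F k in sequentially. exp (-1) < G (real k)"
    by (rule order_tendstoD(1)[OF Ginf]) simp
  then obtain k0 where k0: "exp (-1) \<le> G (real k0)"
    by (auto simp: eventually_sequentially intro: less_imp_le)
  define S where "S = {\<tau>. exp (-1) \<le> G \<tau>}"
  have Spos: "0 < x" if "x \<in> S" for x
  proof (rule ccontr)
    assume "\<not> 0 < x"
    then have "G x \<le> G 0" by (intro Gmono) simp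
    then show False using that G0 by (simp add: S_def G_def)
  qed
  have Sne: "S \<noteq> {}" using k0 by (auto simp: S_def)
  have bdd: "bdd_below S" using Spos by (auto intro!: bdd_belowI[of _ 0] less_imp_le)
  define \<tau>0 where "\<tau>0 = Inf S"
  have inv_mono: "1 / real (Suc k) \<le> 1 / real (Suc m)" if "m \<le> k" for m k :: nat
    using that by (intro divide_left_mono) auto
  have tau0: "0 \<le> \<tau>0" unfolding \<tau>0_def by (rule cInf_greatest[OF Sne]) (use Spos in force)
  have Gright: "(\<lambda>k. G (\<tau>0 + 1 / Suc k)) \<longlonglongrightarrow> G \<tau>0"
    unfolding G_def
  proof (intro tendsto_prod tendsto_diff tendsto_const)
    fix j
    interpret prob_space "D j" by (rule prob)
    have "(\<lambda>k. measure (D j) {\<tau>0 + 1 / Suc k<..}) \<longlonglongrightarrow> measure (D j) (\<Union>k. {\<tau>0 + 1 / Suc k<..})"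
    proof (rule finite_Lim_measure_incseq)
      show "incseq (\<lambda>k. {\<tau>0 + 1 / real (Suc k)<..})"
        unfolding incseq_def
      proof (intro allI impI subsetI)
        fix m k x assume "m \<le> k" "x \<in> {\<tau>0 + 1 / real (Suc m)<..}"
        then show "x \<in> {\<tau>0 + 1 / real (Suc k)<..}" using inv_mono[of m k] by simp
      qed
    qed (auto simp: sets)
    moreover have "(\<Union>k. {\<tau>0 + 1 / Suc k<..}) = {\<tau>0<..}"
    proof (auto)
      fix x k assume "\<tau>0 + 1 / (1 + real k) < x"
      moreover have "0 < 1 / (1 + real k)" by simp
      ultimately show "\<tau>0 < x" by linarith
    next
      fix x assume "\<tau>0 < x"
      then obtain k where "inverse (real (Suc k)) < x - \<tau>0" using reals_Archimedean[of "x - \<tau>0"] by auto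
      then show "\<exists>k. \<tau>0 + 1 / (1 + real k) < x" by (intro exI[of _ k]) (simp add: inverse_eq_divide)
    qed
    ultimately show "(\<lambda>k. measure (D j) {\<tau>0 + 1 / Suc k<..}) \<longlonglongrightarrow> measure (D j) {\<tau>0<..}" by simp
  qed
  have G_tau0: "exp (-1) \<le> G \<tau>0"
  proof (rule LIMSEQ_le_const[OF Gright], intro exI allI impI)
    fix k :: nat
    have "\<exists>s\<in>S. s < \<tau>0 + 1 / Suc k"
      unfolding \<tau>0_def by (subst cInf_less_iff[OF Sne bdd, symmetric]) (simp add: \<tau>0_def[symmetric])
    then obtain s where s: "s \<in> S" "s < \<tau>0 + 1 / Suc k" by blast
    have "exp (-1) \<le> G s" using s by (simp add: S_def)
    also have "\<dots> \<le> G (\<tau>0 + 1 / Suc k)" using s by (intro Gmono) simp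
    finally show "exp (-1) \<le> G (\<tau>0 + 1 / Suc k)" .
  qed
  have below: "G \<tau> < exp (-1)" if "\<tau> < \<tau>0" for \<tau>
  proof (rule ccontr)
    assume "\<not> G \<tau> < exp (-1)"
    then have "\<tau> \<in> S" by (simp add: S_def)
    then have "\<tau>0 \<le> \<tau>" unfolding \<tau>0_def by (rule cInf_lower[OF _ bdd])
    then show False using that by simp
  qed
  have Gleft: "(\<lambda>k. G (\<tau>0 - 1 / Suc k)) \<longlonglongrightarrow> H \<tau>0"
    unfolding G_def H_def
  proof (intro tendsto_prod tendsto_diff tendsto_const)
    fix j
    interpret prob_space "D j" by (rule prob)
    have "(\<lambda>k. measure (D j) {\<tau>0 - 1 / Suc k<..}) \<longlonglongrightarrow> measure (D j) (\<Inter>k. {\<tau>0 - 1 / Suc k<..})"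
    proof (rule finite_Lim_measure_decseq)
      show "decseq (\<lambda>k. {\<tau>0 - 1 / real (Suc k)<..})"
        unfolding decseq_def
      proof (intro allI impI subsetI)
        fix m k x assume "m \<le> k" "x \<in> {\<tau>0 - 1 / real (Suc k)<..}"
        then show "x \<in> {\<tau>0 - 1 / real (Suc m)<..}" using inv_mono[of m k] by simp
      qed
    qed (auto simp: sets)
    moreover have "(\<Inter>k. {\<tau>0 - 1 / Suc k<..}) = {\<tau>0..}"
    proof (auto)
      fix x k assume "\<tau>0 \<le> x"
      moreover have "0 < 1 / (1 + real k)" by simp
      ultimately show "\<tau>0 - 1 / (1 + real k) < x" by linarith
    next
      fix x assume a: "\<forall>k. \<tau>0 - 1 / (1 + real k) < x"
      show "\<tau>0 \<le> x"
      proof (rule ccontr)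
        assume "\<not> \<tau>0 \<le> x"
        then obtain k where "inverse (real (Suc k)) < \<tau>0 - x" using reals_Archimedean[of "\<tau>0 - x"] by auto
        then show False using a[rule_format, of k] by (simp add: inverse_eq_divide)
      qed
    qed
    ultimately show "(\<lambda>k. measure (D j) {\<tau>0 - 1 / Suc k<..}) \<longlonglongrightarrow> measure (D j) {\<tau>0..}" by simp
  qed
  have H_tau0: "H \<tau>0 \<le> exp (-1)"
    by (rule LIMSEQ_le_const2[OF Gleft]) (auto intro!: less_imp_le below)
  define \<phi> where "\<phi> \<theta> = (\<Prod>j<n. 1 - (measure (D j) {\<tau>0<..} + \<theta> * measure (D j) {\<tau>0}))" for \<theta>
  have phi0: "\<phi> 0 = G \<tau>0" by (simp add: \<phi>_def G_def)
  have phi1: "\<phi> 1 = H \<tau>0"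
    unfolding \<phi>_def H_def
  proof (intro prod.cong refl)
    fix j
    interpret prob_space "D j" by (rule prob)
    have e: "{\<tau>0..} = {\<tau>0<..} \<union> {\<tau>0}" by auto
    have "measure (D j) ({\<tau>0<..} \<union> {\<tau>0}) = measure (D j) {\<tau>0<..} + measure (D j) {\<tau>0}"
      by (rule finite_measure_Union) (auto simp: sets)
    then have "measure (D j) {\<tau>0..} = measure (D j) {\<tau>0<..} + measure (D j) {\<tau>0}"
      by (simp only: e)
    then show "1 - (measure (D j) {\<tau>0<..} + 1 * measure (D j) {\<tau>0}) = 1 - measure (D j) {\<tau>0..}" by simp
  qed
  have "\<exists>x\<ge>0. x \<le> 1 \<and> \<phi> x = exp (-1)"
    by (rule IVT2') (use phi0 phi1 G_tau0 H_tau0 in \<open>auto simp: \<phi>_def intro!: continuous_intros\<close>)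
  then show ?thesis using tau0 unfolding \<phi>_def by blast
qed



theorem mainTheorem13:
  fixes n :: nat and D :: "nat \<Rightarrow> real measure"
  assumes prob: "\<And>i. i < n \<Longrightarrow> prob_space (D i)"
    and borel: "\<And>i. i < n \<Longrightarrow> sets (D i) = sets borel"
    and nonneg: "\<And>i. i < n \<Longrightarrow> AE x in D i. 0 \<le> x"
    and finexp: "\<And>i. i < n \<Longrightarrow> integrable (D i) (\<lambda>x. x)"
    and small: "(\<Sum>i<n. measure (D i) {0<..}) \<le> 1"
  shows "\<exists>\<tau>::real. \<exists>\<theta>::real. 0 \<le> \<theta> \<and> \<theta> \<le> 1 \<and>
           (\<integral>\<omega>. ft_value n \<tau> \<omega> \<partial>ps_space n D \<theta>)
             \<ge> (1 - 1 / exp 1) * (\<Sum>i<n. \<integral>x. x \<partial>D i)"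
proof -
  define D' where "D' j = (if j < n then D j else return borel (0::real))" for j
  have prob': "prob_space (D' j)" for j
    by (auto simp: D'_def prob intro: prob_space_return)
  have sets': "sets (D' j) = sets borel" for j
    by (auto simp: D'_def borel)
  have int0: "integrable (return borel (0::real)) (\<lambda>x. x)"
  proof -
    interpret R: prob_space "return borel (0::real)" by (rule prob_space_return) simp
    show ?thesis by (rule R.integrable_const_bound[where B=0]) (auto simp: AE_return)
  qed
  have int': "integrable (D' j) (\<lambda>x. x)" for j
    by (auto simp: D'_def finexp int0)
  have nn': "AE x in D' i. 0 \<le> x" if "i < n" for i
    using nonneg[OF that] that unfolding D'_def by simp
  have ps: "ps_space n D \<theta> = ps_space n D' \<theta>" for \<theta>
    unfolding ps_space_def by (intro arg_cong2[where f=pair_measure] PiM_cong refl) (auto simp: D'_def)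
  have sumE: "(\<Sum>i<n. \<integral>x. x \<partial>D i) = (\<Sum>i<n. \<integral>x. x \<partial>D' i)"
    by (intro sum.cong refl) (simp add: D'_def)
  have small': "(\<Sum>i<n. measure (D' i) {0<..}) \<le> 1"
    using small by (simp add: D'_def)
  have go: "(1 - 1 / exp 1) * (\<Sum>i<n. \<integral>x. x \<partial>D i) \<le> (\<integral>\<omega>. ft_value n \<tau> \<omega> \<partial>ps_space n D \<theta>)"
    if t: "0 \<le> \<tau>" "0 \<le> \<theta>" "\<theta> \<le> 1"
      and P1: "exp (-1) \<le> (\<Prod>j<n. 1 - (measure (D' j) {\<tau><..} + \<theta> * measure (D' j) {\<tau>}))"
      and P2: "\<tau> = 0 \<or> (\<Prod>j<n. 1 - (measure (D' j) {\<tau><..} + \<theta> * measure (D' j) {\<tau>})) \<le> exp (-1)"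
    for \<tau> \<theta>
  proof -
    interpret PS n D' \<tau> \<theta>
      by (rule PS.intro[OF prob' sets' int' t(1) t(2) t(3)])
    have qq: "(\<Prod>j<n. 1 - q j) = (\<Prod>j<n. 1 - (measure (D' j) {\<tau><..} + \<theta> * measure (D' j) {\<tau>}))"
      by (simp only: q_eq)
    have f: "(1 - 1 / exp 1) * (\<Sum>i<n. \<integral>x. x \<partial>D' i) \<le> (\<integral>\<omega>. ft_value n \<tau> \<omega> \<partial>ps_space n D' \<theta>)"
    proof (rule final)
      show "exp (-1) \<le> (\<Prod>j<n. 1 - q j)" unfolding qq by (rule P1)
      show "\<tau> = 0 \<or> (\<Prod>j<n. 1 - q j) \<le> exp (-1)" unfolding qq by (rule P2)
      show "\<And>i. i < n \<Longrightarrow> AE x in D' i. 0 \<le> x" by (rule nn')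
      show "(\<Sum>i<n. measure (D' i) {0<..}) \<le> 1" by (rule small')
    qed
    show ?thesis by (subst ps, subst sumE, rule f)
  qed
  show ?thesis
  proof (cases "exp (-1) \<le> (\<Prod>j<n. 1 - measure (D' j) {0<..})")
    case True
    have "(1 - 1 / exp 1) * (\<Sum>i<n. \<integral>x. x \<partial>D i) \<le> (\<integral>\<omega>. ft_value n 0 \<omega> \<partial>ps_space n D 0)"
      by (rule go) (use True in auto)
    then show ?thesis by (intro exI[of _ 0]) simp
  next
    case False
    then obtain \<tau> \<theta> where t: "0 \<le> \<tau>" "0 \<le> \<theta>" "\<theta> \<le> 1"
      and P: "(\<Prod>j<n. 1 - (measure (D' j) {\<tau><..} + \<theta> * measure (D' j) {\<tau>})) = exp (-1)"
      using exists_tau[of D' n, OF prob' sets'] False by (auto simp: not_le)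
    have "(1 - 1 / exp 1) * (\<Sum>i<n. \<integral>x. x \<partial>D i) \<le> (\<integral>\<omega>. ft_value n \<tau> \<omega> \<partial>ps_space n D \<theta>)"
      by (rule go[OF t]) (use P in auto)
    then show ?thesis using t by (intro exI[of _ \<tau>] exI[of _ \<theta>]) simp
  qed
qed

end
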